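(* Let $k>0$ be real, let $M=\begin{bmatrix} k-1 & k-1 & k\\ 1&0&0\\ 0&1&0\end{bmatrix}$ and $$N_0=\begin{bmatrix} k-1 & 2k & 2k\\ 2 & 1-k & 2\\ \frac{2}{k} & \frac{2}{k} & -\frac{1}{k}(k^2+k-2)\end{bmatrix}.$$ For every integer $n\ge 1$, $$N_0M^{n}=\begin{bmatrix} j_{n+1} & t_{n-1} & kj_{n}\\ j_{n} & t_{n-2} & kj_{n-1}\\ j_{n-1} & t_{n-3} & kj_{n-2}\end{bmatrix},$$ where $t_{m}=(k-1)j_{m+1}+kj_{m}$ for every integer $m$.
   Context: For real $k>0$, the third-order $k$-Jacobsthal--Lucas sequence $(j_n)=(j_n^{(3)}(k))$ is defined by $j_0=2$, $j_1=k-1$, $j_2=k^2+1$ and $j_{n+3}=(k-1)j_{n+2}+(k-1)j_{n+1}+kj_n$. It is extended to all negative indices by running this recurrence backwards, i.e. $j_{m}=\frac{1}{k}\left(j_{m+3}-(k-1)j_{m+2}-(k-1)j_{m+1}\right)$. *)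

theory Defs
  imports "HOL-Analysis.Analysis"
begin

fun jpos :: "real \<Rightarrow> nat \<Rightarrow> real" where
  "jpos k 0 = 2"
| "jpos k (Suc 0) = k - 1"
| "jpos k (Suc (Suc 0)) = k^2 + 1"
| "jpos k (Suc (Suc (Suc n))) =
     (k - 1) * jpos k (Suc (Suc n)) + (k - 1) * jpos k (Suc n) + k * jpos k n"

text \<open>Backward extension: jback k n = j_{2-n}, computed by running the recurrence backwards.\<close>
fun jback :: "real \<Rightarrow> nat \<Rightarrow> real" where
  "jback k 0 = k^2 + 1"
| "jback k (Suc 0) = k - 1"
| "jback k (Suc (Suc 0)) = 2"
| "jback k (Suc (Suc (Suc n))) =
     (jback k n - (k - 1) * jback k (Suc n) - (k - 1) * jback k (Suc (Suc n))) / k"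

definition jl :: "real \<Rightarrow> int \<Rightarrow> real" where
  "jl k m = (if 0 \<le> m then jpos k (nat m) else jback k (nat (2 - m)))"

definition tl3 :: "real \<Rightarrow> int \<Rightarrow> real" where
  "tl3 k m = (k - 1) * jl k (m + 1) + k * jl k m"

fun matpow :: "real^'n^'n \<Rightarrow> nat \<Rightarrow> real^'n^'n" where
  "matpow A 0 = mat 1"
| "matpow A (Suc n) = matpow A n ** A"

end

theory Submission
  imports Defs
begin

lemma jl_nonneg: "0 \<le> m \<Longrightarrow> jl k m = jpos k (nat m)"
  by (simp add: jl_def)

lemma jl_pos': "jl k (int p) = jpos k p"
  by (simp add: jl_def)

lemma jl_neg: "jl k (- int q) = jback k (q + 2)"
proof (cases q)
  case 0 then show ?thesis by (simp add: jl_def)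
next
  case (Suc n)
  have "jl k (- int q) = jback k (nat (2 - (- int q)))" using Suc by (simp add: jl_def)
  moreover have "nat (2 - (- int q)) = q + 2" by simp
  ultimately show ?thesis by (simp only:)
qed
lemma rec_pos: "jl k (int p + 3) = (k - 1) * jl k (int p + 2) + (k - 1) * jl k (int p + 1) + k * jl k (int p)"
proof -
  have e: "int p + 3 = int (Suc (Suc (Suc p)))" "int p + 2 = int (Suc (Suc p))" "int p + 1 = int (Suc p)"
    by simp_all
  show ?thesis unfolding e jl_pos' by (rule jpos.simps(4))
qed
lemma rec_m1: assumes "k \<noteq> 0"
  shows "jl k 2 = (k - 1) * jl k 1 + (k - 1) * jl k 0 + k * jl k (-1)"
proof -
  have a: "jl k 2 = k^2 + 1" "jl k 1 = k - 1" "jl k 0 = 2"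
    using jl_pos'[of k 2] jl_pos'[of k 1] jl_pos'[of k 0] by (simp_all add: numeral_2_eq_2)
  have "jl k (-1) = jback k 3" proof -
    have t: "(1::nat)+2 = 3" "int 1 = 1" by simp_all
    show ?thesis using jl_neg[of k 1] unfolding t .
  qed
  also have "... = (jback k 0 - (k - 1) * jback k 1 - (k - 1) * jback k 2) / k"
    using jback.simps(4)[of k 0] by (simp only: numeral_3_eq_3 numeral_2_eq_2 One_nat_def)
  also have "... = (k^2 + 1 - (k - 1) * (k - 1) - (k - 1) * 2) / k"
  proof -
    have j: "jback k 0 = k^2+1" "jback k 1 = k-1" "jback k 2 = 2" by (simp_all add: numeral_2_eq_2)
    show ?thesis by (simp only: j)
  qed
  finally have b: "jl k (-1) = (k^2 + 1 - (k - 1) * (k - 1) - (k - 1) * 2) / k" .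
  show ?thesis unfolding a b using assms by (simp add: field_simps)
qed
lemma rec_m2: assumes "k \<noteq> 0"
  shows "jl k 1 = (k - 1) * jl k 0 + (k - 1) * jl k (-1) + k * jl k (-2)"
proof -
  have a: "jl k 1 = k - 1" "jl k 0 = 2"
    using jl_pos'[of k 1] jl_pos'[of k 0] by simp_all
  have c: "jl k (-1) = jback k 3" proof -
    have t: "(1::nat)+2 = 3" "int 1 = 1" by simp_all
    show ?thesis using jl_neg[of k 1] unfolding t .
  qed
  have "jl k (-2) = jback k 4" proof -
    have t: "(2::nat)+2 = 4" "int 2 = 2" by simp_all
    show ?thesis using jl_neg[of k 2] unfolding t .
  qed
  also have "... = (jback k 1 - (k - 1) * jback k 2 - (k - 1) * jback k 3) / k"
    using jback.simps(4)[of k 1] by (simp add: numeral_3_eq_3 eval_nat_numeral)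
  also have "... = (k - 1 - (k - 1) * 2 - (k - 1) * jback k 3) / k"
    by (simp add: numeral_2_eq_2)
  finally have b: "jl k (-2) = (k - 1 - (k - 1) * 2 - (k - 1) * jback k 3) / k" .
  show ?thesis unfolding a b c using assms by (simp add: field_simps)
qed
lemma rec_neg: assumes "k \<noteq> 0"
  shows "jl k (- int s) = (k - 1) * jl k (- int (s+1)) + (k - 1) * jl k (- int (s+2)) + k * jl k (- int (s+3))"
proof -
  have e2: "s + 3 + 2 = Suc (Suc (Suc (s+2)))" "s + 1 + 2 = Suc (s+2)" "s + 2 + 2 = Suc (Suc (s+2))" by simp_all
  have h: "jback k (Suc (Suc (Suc (s+2)))) = (jback k (s+2) - (k - 1) * jback k (Suc (s+2)) - (k - 1) * jback k (Suc (Suc (s+2)))) / k"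
    by (rule jback.simps(4))
  show ?thesis unfolding jl_neg e2 h using assms
    by (simp add: field_simps del: jback.simps)
qed

lemma jl_rec:
  assumes "k \<noteq> 0"
  shows "jl k (m + 3) = (k - 1) * jl k (m + 2) + (k - 1) * jl k (m + 1) + k * jl k m"
proof -
  consider (p) p where "m = int p" | (a) "m = -1" | (b) "m = -2" | (c) s where "m = - int (s+3)"
  proof -
    assume h1: "\<And>p. m = int p \<Longrightarrow> thesis" and h2: "m = -1 \<Longrightarrow> thesis"
      and h3: "m = -2 \<Longrightarrow> thesis" and h4: "\<And>s. m = - int (s+3) \<Longrightarrow> thesis"
    show thesis
    proof (cases "0 \<le> m")
      case True then show thesis using h1[of "nat m"] by simp
    next
      case False
      show thesis
      proof (cases "m = -1 \<or> m = -2")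
        case True then show thesis using h2 h3 by blast
      next
        case F2: False
        have "m = - int (nat (- m - 3) + 3)" using False F2 by simp
        then show thesis by (rule h4)
      qed
    qed
  qed
  then show ?thesis
  proof cases
    case p then show ?thesis by (simp only: rec_pos)
  next
    case a
    have e: "m + 3 = 2" "m + 2 = 1" "m + 1 = 0" using a by simp_all
    show ?thesis unfolding e by (subst a, rule rec_m1[OF assms])
  next
    case b
    have e: "m + 3 = 1" "m + 2 = 0" "m + 1 = -1" using b by simp_all
    show ?thesis unfolding e by (subst b, rule rec_m2[OF assms])
  next
    case (c s)
    have e: "m + 3 = - int s" "m + 2 = - int (s+1)" "m + 1 = - int (s+2)" using c by simp_all
    show ?thesis unfolding e by (subst c, rule rec_neg[OF assms])
  qed
qed

definition RR :: "real \<Rightarrow> int \<Rightarrow> real^3^3" where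
  "RR k n = vector [vector [jl k (n + 1), tl3 k (n - 1), k * jl k n],
                  vector [jl k n, tl3 k (n - 2), k * jl k (n - 1)],
                  vector [jl k (n - 1), tl3 k (n - 3), k * jl k (n - 2)]]"

lemma RR_step:
  assumes "k \<noteq> 0"
  shows "RR k n ** (vector [vector [k - 1, k - 1, k], vector [1, 0, 0], vector [0, 1, 0]] :: real^3^3)
     = RR k (n + 1)"
proof -
  have r: "\<And>m. jl k (m + 3) = (k - 1) * jl k (m + 2) + (k - 1) * jl k (m + 1) + k * jl k m"
    using jl_rec[OF assms] by blast
  have a: "jl k (n + 2) = (k - 1) * jl k (n + 1) + (k - 1) * jl k n + k * jl k (n - 1)"
    using r[of "n - 1"] by (simp add: algebra_simps)
  have b: "jl k (n + 1) = (k - 1) * jl k n + (k - 1) * jl k (n - 1) + k * jl k (n - 2)"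
    using r[of "n - 2"] by (simp add: algebra_simps)
  have c: "jl k n = (k - 1) * jl k (n - 1) + (k - 1) * jl k (n - 2) + k * jl k (n - 3)"
    using r[of "n - 3"] by (simp add: algebra_simps)
  show ?thesis
    unfolding RR_def
    by (simp add: vec_eq_iff forall_3 matrix_matrix_mult_def sum_3 tl3_def a b c a[unfolded add.commute[of n]] b[unfolded add.commute[of n]] algebra_simps)
qed

lemma RR0:
  assumes "k \<noteq> 0"
  shows "RR k 0 = (vector [vector [k - 1, 2 * k, 2 * k],
                  vector [2, 1 - k, 2],
                  vector [2 / k, 2 / k, - (1 / k) * (k^2 + k - 2)]] :: real^3^3)"
proof -
  have v: "jl k 1 = k - 1" "jl k 0 = 2" "jl k (-1) = jback k 3" "jl k (-2) = jback k 4" "jl k (-3) = jback k 5"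
    by (simp_all add: jl_def)
  show ?thesis
    unfolding RR_def tl3_def using assms
    by (simp add: v vec_eq_iff forall_3 numeral_eq_Suc field_simps power2_eq_square)
qed

theorem mainTheorem2:
  fixes k :: real and n :: nat
  assumes "k > 0" and "n \<ge> 1"
  shows "(vector [vector [k - 1, 2 * k, 2 * k],
                  vector [2, 1 - k, 2],
                  vector [2 / k, 2 / k, - (1 / k) * (k^2 + k - 2)]] :: real^3^3)
         ** matpow (vector [vector [k - 1, k - 1, k],
                            vector [1, 0, 0],
                            vector [0, 1, 0]] :: real^3^3) n
       = (vector [vector [jl k (int n + 1), tl3 k (int n - 1), k * jl k (int n)],
                  vector [jl k (int n), tl3 k (int n - 2), k * jl k (int n - 1)],
                  vector [jl k (int n - 1), tl3 k (int n - 3), k * jl k (int n - 2)]] :: real^3^3)"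
proof -
  have k: "k \<noteq> 0" using assms by simp
  have "RR k 0 ** matpow (vector [vector [k - 1, k - 1, k], vector [1, 0, 0], vector [0, 1, 0]] :: real^3^3) m = RR k (int m)" (is "RR k 0 ** matpow ?A m = _") for m
  proof (induction m)
    case 0 then show ?case by simp
  next
    case (Suc m)
    have "RR k 0 ** matpow ?A (Suc m) = (RR k 0 ** matpow ?A m) ** ?A" by (simp add: matrix_mul_assoc)
    also have "... = RR k (int m) ** ?A" using Suc.IH by simp
    also have "... = RR k (int m + 1)" by (rule RR_step[OF k])
    also have "... = RR k (int (Suc m))" by (simp add: add.commute)
    finally show ?case .
  qed
  then show ?thesis unfolding RR0[OF k] by (simp add: RR_def)
qed

end
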